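(* For all $\varepsilon'>0$ and $\delta>0$ there exists $\varepsilon=\varepsilon(\varepsilon',\delta)>0$ such that the following holds. Let $(V_1,V_2,V_3)$ be an $\varepsilon$-typical $(\varepsilon,p)$-regular triple in a graph in which every pair $(V_i,V_j)$ has density at least $\delta p$. Assume moreover that the endpoints of no edge between $V_2$ and $V_3$ have more than $4p^2|V_1|$ common neighbours in $V_1$. Then $V_1$ contains at most $\varepsilon'|V_1|$ vertices that are not $\varepsilon'$-good.
   Context: For disjoint $X,Y$, $d(X,Y)=e(X,Y)/(|X||Y|)$; $x=(1\pm a)y$ means $x\in[(1-a)y,(1+a)y]$. A pair $(X,Y)$ is $(\varepsilon,p)$-regular if $|d(X,Y)-d(X',Y')|\le\varepsilon p$ for all $X'\subset X,Y'\subset Y$ with $|X'|\ge\varepsilon|X|,|Y'|\ge\varepsilon|Y|$; a triple is $(\varepsilon,p)$-regular if all three pairs are. Write $d(V_i,V_j)=d_{ij}p$. For $\{i,j,k\}=\{1,2,3\}$, $v\in V_i$ is $\varepsilon$-typical if with $N_j=N(v)\cap V_j$, $N_k=N(v)\cap V_k$: $|N_j|=(1\pm\varepsilon)d_{ij}p|V_j|$, $|N_k|=(1\pm\varepsilon)d_{ik}p|V_k|$, and there exist $N_j'\subset N_j,N_k'\subset N_k$ with $|N_j'|\ge(1-\varepsilon)|N_j|,|N_k'|\ge(1-\varepsilon)|N_k|$ such that $(N_j',N_k')$ is $(\varepsilon,p)$-regular of density $(1\pm\varepsilon)d_{jk}p$. The triple is $\varepsilon$-typical if it is $(\varepsilon,p)$-regular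 and for each $i$ all but at most $\varepsilon|V_i|$ vertices of $V_i$ are $\varepsilon$-typical. An edge $uw$, $u\in V_j$, $w\in V_k$, is $\varepsilon'$-good if $u,w$ have at least $(1-\varepsilon')d_{ij}d_{ik}p^2|V_i|$ common neighbours in $V_i$. A vertex $v\in V_i$ is $\varepsilon'$-good if it is $\varepsilon'$-typical and at most $\varepsilon' d_{12}d_{13}d_{23}p^3|V_j||V_k|$ edges between $N(v)\cap V_j$ and $N(v)\cap V_k$ are not $\varepsilon'$-good. *)

theory Defs
  imports Main Complex_Main
begin

definition edges_between :: "(nat \<Rightarrow> nat \<Rightarrow> bool) \<Rightarrow> nat set \<Rightarrow> nat set \<Rightarrow> nat" where
  "edges_between E X Y = card {(x, y). x \<in> X \<and> y \<in> Y \<and> E x y}"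

definition dens :: "(nat \<Rightarrow> nat \<Rightarrow> bool) \<Rightarrow> nat set \<Rightarrow> nat set \<Rightarrow> real" where
  "dens E X Y = real (edges_between E X Y) / (real (card X) * real (card Y))"

text \<open>x = (1 +- a) y\<close>
definition approx_eq :: "real \<Rightarrow> real \<Rightarrow> real \<Rightarrow> bool" where
  "approx_eq x a y \<longleftrightarrow> (1 - a) * y \<le> x \<and> x \<le> (1 + a) * y"

definition regular_pair :: "(nat \<Rightarrow> nat \<Rightarrow> bool) \<Rightarrow> real \<Rightarrow> real \<Rightarrow> nat set \<Rightarrow> nat set \<Rightarrow> bool" where
  "regular_pair E eps p X Y \<longleftrightarrow>
     (\<forall>X' Y'. X' \<subseteq> X \<and> Y' \<subseteq> Y \<and> real (card X') \<ge> eps * real (card X)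
        \<and> real (card Y') \<ge> eps * real (card Y)
        \<longrightarrow> \<bar>dens E X Y - dens E X' Y'\<bar> \<le> eps * p)"

definition regular_triple :: "(nat \<Rightarrow> nat \<Rightarrow> bool) \<Rightarrow> real \<Rightarrow> real \<Rightarrow> nat set \<Rightarrow> nat set \<Rightarrow> nat set \<Rightarrow> bool" where
  "regular_triple E eps p V1 V2 V3 \<longleftrightarrow>
     regular_pair E eps p V1 V2 \<and> regular_pair E eps p V1 V3 \<and> regular_pair E eps p V2 V3"

definition dcoef :: "(nat \<Rightarrow> nat \<Rightarrow> bool) \<Rightarrow> real \<Rightarrow> nat set \<Rightarrow> nat set \<Rightarrow> real" where
  "dcoef E p X Y = dens E X Y / p"

definition nbhd :: "(nat \<Rightarrow> nat \<Rightarrow> bool) \<Rightarrow> nat \<Rightarrow> nat set \<Rightarrow> nat set" where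
  "nbhd E v X = {u \<in> X. E v u}"

definition typical_vertex :: "(nat \<Rightarrow> nat \<Rightarrow> bool) \<Rightarrow> real \<Rightarrow> real \<Rightarrow> nat set \<Rightarrow> nat set \<Rightarrow> nat set \<Rightarrow> nat \<Rightarrow> bool" where
  "typical_vertex E eps p Vi Vj Vk v \<longleftrightarrow>
     approx_eq (real (card (nbhd E v Vj))) eps (dcoef E p Vi Vj * p * real (card Vj)) \<and>
     approx_eq (real (card (nbhd E v Vk))) eps (dcoef E p Vi Vk * p * real (card Vk)) \<and>
     (\<exists>Nj' Nk'. Nj' \<subseteq> nbhd E v Vj \<and> Nk' \<subseteq> nbhd E v Vk \<and>
        real (card Nj') \<ge> (1 - eps) * real (card (nbhd E v Vj)) \<and>
        real (card Nk') \<ge> (1 - eps) * real (card (nbhd E v Vk)) \<and>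
        regular_pair E eps p Nj' Nk' \<and>
        approx_eq (dens E Nj' Nk') eps (dcoef E p Vj Vk * p))"

definition typical_triple :: "(nat \<Rightarrow> nat \<Rightarrow> bool) \<Rightarrow> real \<Rightarrow> real \<Rightarrow> nat set \<Rightarrow> nat set \<Rightarrow> nat set \<Rightarrow> bool" where
  "typical_triple E eps p V1 V2 V3 \<longleftrightarrow>
     regular_triple E eps p V1 V2 V3 \<and>
     real (card {v \<in> V1. \<not> typical_vertex E eps p V1 V2 V3 v}) \<le> eps * real (card V1) \<and>
     real (card {v \<in> V2. \<not> typical_vertex E eps p V2 V1 V3 v}) \<le> eps * real (card V2) \<and>
     real (card {v \<in> V3. \<not> typical_vertex E eps p V3 V1 V2 v}) \<le> eps * real (card V3)"

definition good_edge :: "(nat \<Rightarrow> nat \<Rightarrow> bool) \<Rightarrow> real \<Rightarrow> real \<Rightarrow> nat set \<Rightarrow> nat set \<Rightarrow> nat set \<Rightarrow> nat \<Rightarrow> nat \<Rightarrow> bool" where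
  "good_edge E eps' p Vi Vj Vk u w \<longleftrightarrow>
     real (card {v \<in> Vi. E u v \<and> E w v})
       \<ge> (1 - eps') * dcoef E p Vi Vj * dcoef E p Vi Vk * p ^ 2 * real (card Vi)"

definition good_vertex :: "(nat \<Rightarrow> nat \<Rightarrow> bool) \<Rightarrow> real \<Rightarrow> real \<Rightarrow> nat set \<Rightarrow> nat set \<Rightarrow> nat set \<Rightarrow> nat \<Rightarrow> bool" where
  "good_vertex E eps' p Vi Vj Vk v \<longleftrightarrow>
     typical_vertex E eps' p Vi Vj Vk v \<and>
     real (card {(u, w). u \<in> nbhd E v Vj \<and> w \<in> nbhd E v Vk \<and> E u w \<and>
                   \<not> good_edge E eps' p Vi Vj Vk u w})
       \<le> eps' * dcoef E p Vi Vj * dcoef E p Vi Vk * dcoef E p Vj Vk * p ^ 3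
            * real (card Vj) * real (card Vk)"

end

theory Submission
  imports Defs
begin


lemma card_pairs_sum:
  assumes "finite X" "finite Y"
  shows "card {(x, y). x \<in> X \<and> y \<in> Y \<and> P x y} = (\<Sum>x\<in>X. card {y \<in> Y. P x y})"
proof -
  have "{(x, y). x \<in> X \<and> y \<in> Y \<and> P x y} = Sigma X (\<lambda>x. {y \<in> Y. P x y})" by auto
  then show ?thesis using assms by (simp add: card_SigmaI)
qed

lemma card_pairs_sum2:
  assumes "finite X" "finite Y"
  shows "card {(x, y). x \<in> X \<and> y \<in> Y \<and> P x y} = (\<Sum>y\<in>Y. card {x \<in> X. P x y})"
proof -
  have "{(x, y). x \<in> X \<and> y \<in> Y \<and> P x y} = (\<lambda>(y,x). (x,y)) ` {(y, x). y \<in> Y \<and> x \<in> X \<and> P x y}" by auto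
  moreover have "inj_on (\<lambda>(y,x). (x,y)) A" for A :: "('b \<times> 'a) set" by (auto simp: inj_on_def)
  ultimately have "card {(x, y). x \<in> X \<and> y \<in> Y \<and> P x y} = card {(y, x). y \<in> Y \<and> x \<in> X \<and> P x y}"
    by (simp add: card_image)
  then show ?thesis using card_pairs_sum[OF assms(2,1)] by simp
qed

lemma double_count:
  assumes "finite A" "finite B"
  shows "(\<Sum>a\<in>A. card {b \<in> B. P a b}) = (\<Sum>b\<in>B. card {a \<in> A. P a b})"
  using card_pairs_sum[OF assms, of P] card_pairs_sum2[OF assms, of P] by simp

lemma edges_sym:
  assumes "\<forall>x y. E x y \<longleftrightarrow> E y x"
  shows "edges_between E X Y = edges_between E Y X"
proof -
  have "{(x, y). x \<in> X \<and> y \<in> Y \<and> E x y} = (\<lambda>(y,x). (x,y)) ` {(y, x). y \<in> Y \<and> x \<in> X \<and> E y x}"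
    using assms by auto
  moreover have "inj_on (\<lambda>(y,x). (x,y)) A" for A :: "(nat \<times> nat) set" by (auto simp: inj_on_def)
  ultimately show ?thesis unfolding edges_between_def by (simp add: card_image)
qed

lemma dens_sym:
  assumes "\<forall>x y. E x y \<longleftrightarrow> E y x"
  shows "dens E X Y = dens E Y X"
  unfolding dens_def using edges_sym[OF assms, of X Y] by (simp add: mult.commute)

lemma dens_nonneg: "dens E X Y \<ge> 0"
  unfolding dens_def by simp

lemma approx_mono: "approx_eq x a y \<Longrightarrow> a \<le> b \<Longrightarrow> y \<ge> 0 \<Longrightarrow> approx_eq x b y"
  unfolding approx_eq_def by (smt (verit) mult_right_mono)

lemma regular_mono: "regular_pair E a p X Y \<Longrightarrow> a \<le> b \<Longrightarrow> p \<ge> 0 \<Longrightarrow> regular_pair E b p X Y"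
  unfolding regular_pair_def
proof (intro allI impI)
  fix X' Y'
  assume r: "\<forall>X' Y'. X' \<subseteq> X \<and> Y' \<subseteq> Y \<and> a * real (card X) \<le> real (card X') \<and> a * real (card Y) \<le> real (card Y') \<longrightarrow>
           \<bar>dens E X Y - dens E X' Y'\<bar> \<le> a * p"
    and ab: "a \<le> b" and p: "p \<ge> 0"
    and h: "X' \<subseteq> X \<and> Y' \<subseteq> Y \<and> b * real (card X) \<le> real (card X') \<and> b * real (card Y) \<le> real (card Y')"
  have "a * real (card X) \<le> b * real (card X)" "a * real (card Y) \<le> b * real (card Y)"
    using ab by (auto intro: mult_right_mono)
  then have "\<bar>dens E X Y - dens E X' Y'\<bar> \<le> a * p" using r h by force
  also have "\<dots> \<le> b * p" using ab p by (rule mult_right_mono)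
  finally show "\<bar>dens E X Y - dens E X' Y'\<bar> \<le> b * p" .
qed

lemma dcoef_p: "p > 0 \<Longrightarrow> dcoef E p X Y * p = dens E X Y"
  unfolding dcoef_def by simp

lemma typical_mono:
  assumes "typical_vertex E a p Vi Vj Vk v" "a \<le> b" "p > 0"
  shows "typical_vertex E b p Vi Vj Vk v"
proof -
  have n: "dcoef E p X Y * p * c \<ge> 0" "dcoef E p X Y * p \<ge> 0" if "c \<ge> 0" for X Y and c :: real
    using dcoef_p[OF assms(3)] dens_nonneg that by auto
  from assms(1) obtain Nj' Nk' where h: "Nj' \<subseteq> nbhd E v Vj" "Nk' \<subseteq> nbhd E v Vk"
        "real (card Nj') \<ge> (1 - a) * real (card (nbhd E v Vj))"
        "real (card Nk') \<ge> (1 - a) * real (card (nbhd E v Vk))"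
        "regular_pair E a p Nj' Nk'"
        "approx_eq (dens E Nj' Nk') a (dcoef E p Vj Vk * p)"
    unfolding typical_vertex_def by blast
  have "(1 - b) * real (card (nbhd E v Vj)) \<le> (1 - a) * real (card (nbhd E v Vj))"
       "(1 - b) * real (card (nbhd E v Vk)) \<le> (1 - a) * real (card (nbhd E v Vk))"
    using assms(2) by (auto intro: mult_right_mono)
  then show ?thesis using assms h approx_mono n regular_mono[of E a p Nj' Nk' b]
    unfolding typical_vertex_def
    by (smt (verit) of_nat_0_le_iff)
qed



lemma edges_dens:
  assumes "card X > 0" "card Y > 0"
  shows "real (edges_between E X Y) = dens E X Y * card X * card Y"
  using assms unfolding dens_def by simp

lemma small_set_edges:
  assumes reg: "regular_pair E eps p X Y" and fin: "finite X" "finite Y" and AX: "A \<subseteq> X"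
    and cA: "real (card A) \<le> eps * card X" and e: "0 < eps" "eps \<le> 1" and p: "p \<ge> 0"
  shows "real (edges_between E A Y) \<le> (dens E X Y + eps * p) * (2 * eps * card X) * card Y"
proof (cases "A = {} \<or> Y = {}")
  case True
  then have "edges_between E A Y = 0" unfolding edges_between_def by auto
  moreover have "0 \<le> (dens E X Y + eps * p) * (2 * eps * card X) * card Y"
    using dens_nonneg[of E X Y] e p by simp
  ultimately show ?thesis by simp
next
  case False
  then have A0: "A \<noteq> {}" and Y0: "Y \<noteq> {}" by auto
  have finA: "finite A" using fin AX finite_subset by blast
  have "card A \<ge> 1" using A0 finA by (simp add: Suc_le_eq card_gt_0_iff)
  then have ge1: "eps * card X \<ge> 1" using cA by linarith
  define k where "k = nat \<lceil>eps * card X\<rceil>"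
  have c0: "\<lceil>eps * card X\<rceil> \<ge> 0" using ge1 by simp
  have kr: "real k = real_of_int \<lceil>eps * card X\<rceil>" unfolding k_def using c0 by simp
  have k1: "real k \<ge> eps * card X" unfolding kr by linarith
  have k2: "real k \<le> eps * card X + 1" unfolding kr by linarith
  have "eps * card X \<le> card X" using e by (simp add: mult_left_le_one_le)
  then have kX: "k \<le> card X" unfolding k_def by (simp add: nat_le_iff ceiling_le_iff)
  have kA: "card A \<le> k" using cA k1 by linarith
  obtain A' where A': "A \<subseteq> A'" "A' \<subseteq> X" "card A' = k"
    using exists_subset_between[OF kA kX AX fin(1)] by blast
  have "\<bar>dens E X Y - dens E A' Y\<bar> \<le> eps * p"
    using reg A' k1 e unfolding regular_pair_def
    by (smt (verit, del_insts) mult_left_le_one_le of_nat_0_le_iff order_refl)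
  then have dA': "dens E A' Y \<le> dens E X Y + eps * p" by linarith
  have finA': "finite A'" using A' fin finite_subset by blast
  have "edges_between E A Y \<le> edges_between E A' Y"
    unfolding edges_between_def
    by (rule card_mono) (use finA' fin A' in \<open>auto intro: finite_subset[of _ "A' \<times> Y"]\<close>)
  then have "real (edges_between E A Y) \<le> real (edges_between E A' Y)" by simp
  also have "\<dots> = dens E A' Y * k * card Y"
  proof -
    have "card Y > 0" using Y0 fin by (simp add: card_gt_0_iff)
    moreover have "card A' > 0" using A' k1 ge1 by simp
    ultimately show ?thesis using edges_dens[of A' Y E] A' by simp
  qed
  also have "\<dots> \<le> (dens E X Y + eps * p) * (2 * eps * card X) * card Y"
  proof -
    have "real k \<le> 2 * eps * card X" using k2 ge1 by linarith
    then have "dens E A' Y * k \<le> (dens E X Y + eps * p) * (2 * eps * card X)"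
      using dA' dens_nonneg[of E A' Y] by (intro mult_mono) auto
    then show ?thesis by (simp add: mult_right_mono)
  qed
  finally show ?thesis .
qed



lemma typical_u_bad:
  assumes sym: "\<forall>x y. E x y \<longleftrightarrow> E y x" and fin: "finite V1" "finite V3"
   and tu: "typical_vertex E eps p V2 V1 V3 u"
   and p: "0 < p" and e: "0 < eps" "eps \<le> 1"
   and d13: "dens E V1 V3 \<ge> \<delta> * p" and \<delta>: "\<delta> > 0"
   and cond: "eps + eps/\<delta> + 2*eps \<le> eps'"
  shows "real (card {w\<in>V3. E u w \<and> \<not> good_edge E eps' p V1 V2 V3 u w}) \<le> 2*eps*card (nbhd E u V3)"
proof -
  define N1 where "N1 = nbhd E u V1"
  define N3 where "N3 = nbhd E u V3"
  define e12 where "e12 = dens E V1 V2"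
  define e13 where "e13 = dens E V1 V3"
  have e21: "dens E V2 V1 = e12" unfolding e12_def using dens_sym[OF sym] by simp
  obtain N1' N3' where h: "N1' \<subseteq> N1" "N3' \<subseteq> N3"
        "real (card N1') \<ge> (1 - eps) * real (card N1)"
        "real (card N3') \<ge> (1 - eps) * real (card N3)"
        "regular_pair E eps p N1' N3'"
        "approx_eq (dens E N1' N3') eps (dcoef E p V1 V3 * p)"
    and hN1: "approx_eq (real (card N1)) eps (dcoef E p V2 V1 * p * real (card V1))"
    using tu unfolding typical_vertex_def N1_def N3_def by blast
  have finN1: "finite N1" "finite N3" unfolding N1_def N3_def nbhd_def using fin by auto
  have finN': "finite N1'" "finite N3'" using h finN1 finite_subset by blast+
  have dN: "dens E N1' N3' \<ge> (1 - eps) * e13"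
    using h(6) unfolding approx_eq_def e13_def dcoef_p[OF p] by simp
  have N1lb: "real (card N1) \<ge> (1 - eps) * e12 * card V1"
    using hN1 unfolding approx_eq_def dcoef_p[OF p] e21 by simp
  define \<theta> where "\<theta> = (1 - eps) * e13 - eps * p"
  define f where "f w = card {x \<in> N1'. E x w}" for w
  define W where "W = {w \<in> N3'. real (f w) < \<theta> * card N1'}"
  have finW: "finite W" unfolding W_def using finN' by auto
  have WN: "W \<subseteq> N3'" unfolding W_def by auto
  have cW: "real (card W) \<le> eps * card N3'"
  proof (rule ccontr)
    assume "\<not> ?thesis"
    then have big: "real (card W) > eps * card N3'" by simp
    then have "card W > 0" using e by (smt (verit) of_nat_0_le_iff mult_nonneg_nonneg of_nat_0_less_iff)
    then have W0: "W \<noteq> {}" by auto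
    then obtain w0 where "w0 \<in> W" by auto
    then have "real (f w0) < \<theta> * card N1'" unfolding W_def by auto
    then have N10: "card N1' > 0" by (cases "card N1' = 0") auto
    have "eps * card N1' \<le> card N1'" using e by (simp add: mult_left_le_one_le)
    then have "\<bar>dens E N1' N3' - dens E N1' W\<bar> \<le> eps * p"
      using h(5) WN big unfolding regular_pair_def by auto
    then have ge: "dens E N1' W \<ge> \<theta>" using dN unfolding \<theta>_def by linarith
    have "real (edges_between E N1' W) = (\<Sum>w\<in>W. real (f w))"
      unfolding edges_between_def f_def using card_pairs_sum2[OF finN'(1) finW, of E] by simp
    also have "\<dots> < (\<Sum>w\<in>W. \<theta> * card N1')"
      by (rule sum_strict_mono[OF finW W0]) (auto simp: W_def)
    also have "\<dots> = \<theta> * card N1' * card W" by simp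
    finally have "dens E N1' W < \<theta>"
      using N10 \<open>card W > 0\<close> unfolding dens_def by (simp add: field_simps)
    then show False using ge by simp
  qed
  have good: "good_edge E eps' p V1 V2 V3 u w" if w: "w \<in> N3' - W" for w
  proof -
    have "{x \<in> N1'. E x w} \<subseteq> {v\<in>V1. E u v \<and> E w v}"
      using h(1) sym unfolding N1_def nbhd_def by auto
    then have "f w \<le> card {v\<in>V1. E u v \<and> E w v}" unfolding f_def
      by (rule card_mono[rotated]) (use fin in auto)
    moreover have fw: "real (f w) \<ge> \<theta> * card N1'" using w unfolding W_def by auto
    ultimately have C: "real (card {v\<in>V1. E u v \<and> E w v}) \<ge> \<theta> * card N1'" by linarith
    have rhs: "(1 - eps') * dcoef E p V1 V2 * dcoef E p V1 V3 * p ^ 2 * real (card V1)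
             = (1 - eps') * e12 * e13 * card V1"
      unfolding e12_def e13_def dcoef_def using p by (simp add: power2_eq_square)
    have e12n: "e12 \<ge> 0" "e13 \<ge> 0" unfolding e12_def e13_def by (simp_all add: dens_nonneg)
    define c where "c = 1 - eps - eps/\<delta>"
    show ?thesis
    proof (cases "c < 0")
      case True
      then have "1 - eps' \<le> 0" using cond e unfolding c_def by simp
      then have "(1 - eps') * e12 * e13 * card V1 \<le> 0" using e12n
        by (simp add: mult_nonpos_nonneg)
      then show ?thesis unfolding good_edge_def rhs by simp
    next
      case False
      have "eps * p \<le> (eps/\<delta>) * e13"
      proof -
        have "eps * p = (eps/\<delta>) * (\<delta> * p)" using \<delta> by simp
        also have "\<dots> \<le> (eps/\<delta>) * e13" using d13 e \<delta> unfolding e13_def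
          by (intro mult_left_mono) auto
        finally show ?thesis .
      qed
      then have th: "\<theta> \<ge> c * e13" unfolding \<theta>_def c_def by (simp add: algebra_simps)
      have N1'lb: "real (card N1') \<ge> (1-eps)^2 * e12 * card V1"
      proof -
        have "(1-eps)^2 * e12 * card V1 = (1-eps) * ((1 - eps) * e12 * card V1)"
          by (simp add: power2_eq_square)
        also have "\<dots> \<le> (1-eps) * card N1" using N1lb e by (intro mult_left_mono) auto
        finally show ?thesis using h(3) by linarith
      qed
      have "c * e13 * ((1-eps)^2 * e12 * card V1) \<le> \<theta> * card N1'"
        using th N1'lb False e12n e
        by (intro mult_mono) (auto intro: order_trans[OF mult_nonneg_nonneg th])
      moreover have "(1 - eps') * e12 * e13 * card V1 \<le> c * e13 * ((1-eps)^2 * e12 * card V1)"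
      proof -
        have c1: "c \<le> 1" unfolding c_def using e \<delta>
          by (smt (verit) divide_nonneg_pos)
        have "c * (1-eps)^2 \<ge> c * (1 - 2*eps)"
          using False e by (intro mult_left_mono) (auto simp: power2_eq_square algebra_simps)
        moreover have "c * (1 - 2*eps) \<ge> 1 - eps'"
        proof -
          have "2*eps*c \<le> 2*eps" using c1 e by (simp add: mult_left_le_one_le)
          then show ?thesis using cond unfolding c_def by (simp add: algebra_simps)
        qed
        ultimately have "1 - eps' \<le> c * (1-eps)^2" by linarith
        then have "(1 - eps') * (e12 * e13 * card V1) \<le> c * (1-eps)^2 * (e12 * e13 * card V1)"
          using e12n by (intro mult_right_mono) auto
        then show ?thesis by (simp add: algebra_simps)
      qed
      ultimately show ?thesis unfolding good_edge_def rhs using C by linarith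
    qed
  qed
  have sub: "{w\<in>V3. E u w \<and> \<not> good_edge E eps' p V1 V2 V3 u w} \<subseteq> (N3 - N3') \<union> W"
    using good unfolding N3_def nbhd_def by auto
  have "card {w\<in>V3. E u w \<and> \<not> good_edge E eps' p V1 V2 V3 u w} \<le> card ((N3 - N3') \<union> W)"
    by (rule card_mono[OF _ sub]) (use finN1 finW in auto)
  also have "\<dots> \<le> card (N3 - N3') + card W" by (rule card_Un_le)
  finally have "real (card {w\<in>V3. E u w \<and> \<not> good_edge E eps' p V1 V2 V3 u w})
       \<le> real (card (N3 - N3')) + real (card W)" by linarith
  also have "real (card (N3 - N3')) = real (card N3) - real (card N3')"
    using card_Diff_subset[OF finN'(2) h(2)] card_mono[OF finN1(2) h(2)] by simp
  also have "eps * card N3' \<le> eps * card N3" using card_mono[OF finN1(2) h(2)] e by simp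
  then have "real (card N3) - real (card N3') + real (card W) \<le> 2 * eps * card N3"
    using cW h(4) by (simp add: algebra_simps)
  finally show ?thesis unfolding N3_def .
qed



theorem proposition2p13:
  "\<forall>eps'>0. \<forall>\<delta>>0. \<exists>eps>0. \<forall>(E :: nat \<Rightarrow> nat \<Rightarrow> bool) (p :: real) V1 V2 V3.
     (\<forall>x y. E x y \<longleftrightarrow> E y x) \<and> (\<forall>x. \<not> E x x) \<and>
     0 < p \<and> p \<le> 1 \<and>
     finite V1 \<and> finite V2 \<and> finite V3 \<and>
     V1 \<inter> V2 = {} \<and> V1 \<inter> V3 = {} \<and> V2 \<inter> V3 = {} \<and>
     typical_triple E eps p V1 V2 V3 \<and>
     dens E V1 V2 \<ge> \<delta> * p \<and> dens E V1 V3 \<ge> \<delta> * p \<and> dens E V2 V3 \<ge> \<delta> * p \<and>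
     (\<forall>u\<in>V2. \<forall>w\<in>V3. E u w \<longrightarrow> real (card {v \<in> V1. E u v \<and> E w v}) \<le> 4 * p ^ 2 * real (card V1))
     \<longrightarrow> real (card {v \<in> V1. \<not> good_vertex E eps' p V1 V2 V3 v}) \<le> eps' * real (card V1)"
proof (intro allI impI)
  fix eps' \<delta> :: real
  assume eps'0: "eps' > 0" and \<delta>0: "\<delta> > 0"
  define a where "a = min eps' 1"
  define b where "b = min \<delta> 1"
  define eps where "eps = a^2 * b^2 / 100"
  have a: "0 < a" "a \<le> 1" "a \<le> eps'" unfolding a_def using eps'0 by auto
  have b: "0 < b" "b \<le> 1" "b \<le> \<delta>" unfolding b_def using \<delta>0 by auto
  have eps0: "eps > 0" unfolding eps_def using a b by simp
  have a2: "a^2 \<le> a" using a by (simp add: power2_eq_square mult_left_le_one_le)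
  have b2: "b^2 \<le> b" using b by (simp add: power2_eq_square mult_left_le_one_le)
  have b21: "b^2 \<le> 1" using b by (simp add: power_le_one)
  have a21: "a^2 \<le> 1" using a by (simp add: power_le_one)
  have "a^2 * b^2 \<le> a^2" using mult_left_le[OF b21, of "a^2"] by simp
  then have ab2: "a^2 * b^2 \<le> a" using a2 by linarith
  have "a^2 * b^2 \<le> b^2" using mult_left_le_one_le[of "b^2" "a^2"] a21 by simp
  then have ab3: "a^2 * b^2 \<le> b" using b2 by linarith
  have epsa: "eps \<le> a / 100" unfolding eps_def using ab2 by simp
  have epsb: "eps \<le> b / 100" unfolding eps_def using ab3 by simp
  have eps1: "eps \<le> 1" using epsa a by simp
  have epsd: "eps \<le> \<delta>" using epsb b by simp
  have epsdiv: "eps / \<delta> \<le> a / 100"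
  proof -
    have "eps / \<delta> \<le> eps / b" using b eps0 by (intro divide_left_mono) auto
    also have "eps / b = a^2 * b / 100" unfolding eps_def using b by (simp add: power2_eq_square)
    also have "\<dots> \<le> a / 100"
    proof -
      have "a^2 * b \<le> a^2" using mult_left_le[of b "a^2"] b by simp
      then show ?thesis using a2 by simp
    qed
    finally show ?thesis .
  qed
  have cond: "eps + eps/\<delta> + 2*eps \<le> eps'" using epsa epsdiv a by linarith
  show "\<exists>eps>0. \<forall>(E :: nat \<Rightarrow> nat \<Rightarrow> bool) (p :: real) V1 V2 V3.
     (\<forall>x y. E x y \<longleftrightarrow> E y x) \<and> (\<forall>x. \<not> E x x) \<and>
     0 < p \<and> p \<le> 1 \<and>
     finite V1 \<and> finite V2 \<and> finite V3 \<and>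
     V1 \<inter> V2 = {} \<and> V1 \<inter> V3 = {} \<and> V2 \<inter> V3 = {} \<and>
     typical_triple E eps p V1 V2 V3 \<and>
     dens E V1 V2 \<ge> \<delta> * p \<and> dens E V1 V3 \<ge> \<delta> * p \<and> dens E V2 V3 \<ge> \<delta> * p \<and>
     (\<forall>u\<in>V2. \<forall>w\<in>V3. E u w \<longrightarrow> real (card {v \<in> V1. E u v \<and> E w v}) \<le> 4 * p ^ 2 * real (card V1))
     \<longrightarrow> real (card {v \<in> V1. \<not> good_vertex E eps' p V1 V2 V3 v}) \<le> eps' * real (card V1)"
  proof (intro exI[of _ eps] conjI eps0 allI impI)
    fix E :: "nat \<Rightarrow> nat \<Rightarrow> bool" and p :: real and V1 V2 V3
    assume H: "(\<forall>x y. E x y \<longleftrightarrow> E y x) \<and> (\<forall>x. \<not> E x x) \<and>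
     0 < p \<and> p \<le> 1 \<and>
     finite V1 \<and> finite V2 \<and> finite V3 \<and>
     V1 \<inter> V2 = {} \<and> V1 \<inter> V3 = {} \<and> V2 \<inter> V3 = {} \<and>
     typical_triple E eps p V1 V2 V3 \<and>
     dens E V1 V2 \<ge> \<delta> * p \<and> dens E V1 V3 \<ge> \<delta> * p \<and> dens E V2 V3 \<ge> \<delta> * p \<and>
     (\<forall>u\<in>V2. \<forall>w\<in>V3. E u w \<longrightarrow> real (card {v \<in> V1. E u v \<and> E w v}) \<le> 4 * p ^ 2 * real (card V1))"
    then have sym: "\<forall>x y. E x y \<longleftrightarrow> E y x" and p: "0 < p" and fin: "finite V1" "finite V2" "finite V3"
      and tt: "typical_triple E eps p V1 V2 V3"
      and d12: "dens E V1 V2 \<ge> \<delta> * p" and d13: "dens E V1 V3 \<ge> \<delta> * p" and d23: "dens E V2 V3 \<ge> \<delta> * p"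
      and codeg: "\<forall>u\<in>V2. \<forall>w\<in>V3. E u w \<longrightarrow> real (card {v \<in> V1. E u v \<and> E w v}) \<le> 4 * p ^ 2 * real (card V1)"
      by auto
    define e12 where "e12 = dens E V1 V2"
    define e13 where "e13 = dens E V1 V3"
    define e23 where "e23 = dens E V2 V3"
    define n1 where "n1 = real (card V1)"
    define n2 where "n2 = real (card V2)"
    define n3 where "n3 = real (card V3)"
    have dp: "\<delta> * p > 0" using \<delta>0 p by simp
    have e12p: "e12 \<ge> \<delta> * p" "e13 \<ge> \<delta> * p" "e23 \<ge> \<delta> * p"
      using d12 d13 d23 unfolding e12_def e13_def e23_def by auto
    have n0: "n1 \<ge> 0" "n2 \<ge> 0" "n3 \<ge> 0" unfolding n1_def n2_def n3_def by auto
    have "eps * p \<le> \<delta> * p" using epsd p by (simp add: mult_right_mono)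
    then have epsp: "eps * p \<le> e23" using e12p by linarith
    have reg23: "regular_pair E eps p V2 V3" using tt unfolding typical_triple_def regular_triple_def by simp
    have NT1: "real (card {v \<in> V1. \<not> typical_vertex E eps p V1 V2 V3 v}) \<le> eps * n1"
      using tt unfolding typical_triple_def n1_def by simp
    define A where "A = {u \<in> V2. \<not> typical_vertex E eps p V2 V1 V3 u}"
    have cA: "real (card A) \<le> eps * card V2"
      using tt unfolding typical_triple_def A_def by simp
    have finA: "finite A" "A \<subseteq> V2" unfolding A_def using fin by auto
    define bad where "bad u = {w\<in>V3. E u w \<and> \<not> good_edge E eps' p V1 V2 V3 u w}" for u
    define Bad where "Bad = {(u, w). u \<in> V2 \<and> w \<in> V3 \<and> (E u w \<and> \<not> good_edge E eps' p V1 V2 V3 u w)}"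
    have finBad: "finite Bad" unfolding Bad_def
      by (rule finite_subset[of _ "V2 \<times> V3"]) (use fin in auto)
    have cBad: "card Bad = (\<Sum>u\<in>V2. card (bad u))"
      unfolding Bad_def bad_def by (rule card_pairs_sum[OF fin(2,3)])
    have sumA: "real (\<Sum>u\<in>A. card (bad u)) \<le> (e23 + eps * p) * (2 * eps * n2) * n3"
    proof -
      have "(\<Sum>u\<in>A. card (bad u)) \<le> (\<Sum>u\<in>A. card {w\<in>V3. E u w})"
        unfolding bad_def by (intro sum_mono card_mono) (use fin in auto)
      also have "\<dots> = edges_between E A V3"
        unfolding edges_between_def using card_pairs_sum[OF finA(1) fin(3), of E] by simp
      finally have "real (\<Sum>u\<in>A. card (bad u)) \<le> real (edges_between E A V3)" by linarith
      also have "\<dots> \<le> (e23 + eps * p) * (2 * eps * n2) * n3"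
        unfolding e23_def n2_def n3_def
        by (rule small_set_edges[OF reg23 fin(2,3) finA(2) cA eps0 eps1]) (use p in simp)
      finally show ?thesis .
    qed
    have sumT: "real (\<Sum>u\<in>V2-A. card (bad u)) \<le> n2 * (2 * eps * (1 + eps) * e23 * n3)"
    proof -
      have "real (\<Sum>u\<in>V2-A. card (bad u)) = (\<Sum>u\<in>V2-A. real (card (bad u)))" by simp
      also have "\<dots> \<le> (\<Sum>u\<in>V2-A. 2 * eps * (1 + eps) * e23 * n3)"
      proof (rule sum_mono)
        fix u assume u: "u \<in> V2 - A"
        then have tu: "typical_vertex E eps p V2 V1 V3 u" unfolding A_def by auto
        have "real (card (bad u)) \<le> 2*eps*card (nbhd E u V3)"
          unfolding bad_def
          by (rule typical_u_bad[OF sym fin(1,3) tu p eps0 eps1 d13 \<delta>0 cond])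
        also have "real (card (nbhd E u V3)) \<le> (1 + eps) * e23 * n3"
          using tu unfolding typical_vertex_def approx_eq_def dcoef_p[OF p] e23_def n3_def by simp
        then have "2*eps*card (nbhd E u V3) \<le> 2*eps*((1 + eps) * e23 * n3)"
          using eps0 by simp
        finally show "real (card (bad u)) \<le> 2 * eps * (1 + eps) * e23 * n3" by simp
      qed
      also have "\<dots> = real (card (V2 - A)) * (2 * eps * (1 + eps) * e23 * n3)" by simp
      also have "\<dots> \<le> n2 * (2 * eps * (1 + eps) * e23 * n3)"
      proof (rule mult_right_mono)
        show "real (card (V2 - A)) \<le> n2" unfolding n2_def using fin by (simp add: card_mono)
        show "0 \<le> 2 * eps * (1 + eps) * e23 * n3" using eps0 e12p dp n0 by simp
      qed
      finally show ?thesis .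
    qed
    have BadB: "real (card Bad) \<le> 8 * eps * e23 * n2 * n3"
    proof -
      have "card Bad = (\<Sum>u\<in>A. card (bad u)) + (\<Sum>u\<in>V2-A. card (bad u))"
        unfolding cBad using sum.subset_diff[OF finA(2) fin(2)] by (simp add: add.commute)
      then have "real (card Bad) \<le> (e23 + eps * p) * (2 * eps * n2) * n3 + n2 * (2 * eps * (1 + eps) * e23 * n3)"
        using sumA sumT by simp
      also have "\<dots> \<le> (2 * e23) * (2 * eps * n2) * n3 + n2 * (2 * eps * 2 * e23 * n3)"
      proof (rule add_mono)
        show "(e23 + eps * p) * (2 * eps * n2) * n3 \<le> (2 * e23) * (2 * eps * n2) * n3"
          using epsp eps0 n0 by (intro mult_right_mono) auto
        have "2 * eps * (1 + eps) * e23 * n3 \<le> 2 * eps * 2 * e23 * n3"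
          using eps1 eps0 e12p dp n0 by (intro mult_right_mono) auto
        then show "n2 * (2 * eps * (1 + eps) * e23 * n3) \<le> n2 * (2 * eps * 2 * e23 * n3)"
          using n0 by (intro mult_left_mono) auto
      qed
      also have "\<dots> = 8 * eps * e23 * n2 * n3" by (simp add: algebra_simps)
      finally show ?thesis .
    qed
    define B where "B v = {(u, w). u \<in> nbhd E v V2 \<and> w \<in> nbhd E v V3 \<and> E u w \<and>
                   \<not> good_edge E eps' p V1 V2 V3 u w}" for v
    have Beq: "B v = {q \<in> Bad. E v (fst q) \<and> E v (snd q)}" for v
      unfolding B_def Bad_def nbhd_def by auto
    have sumB: "real (\<Sum>v\<in>V1. card (B v)) \<le> real (card Bad) * (4 * p^2 * n1)"
    proof -
      have "(\<Sum>v\<in>V1. card (B v)) = (\<Sum>q\<in>Bad. card {v\<in>V1. E v (fst q) \<and> E v (snd q)})"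
        unfolding Beq by (rule double_count[OF fin(1) finBad])
      then have "real (\<Sum>v\<in>V1. card (B v)) = (\<Sum>q\<in>Bad. real (card {v\<in>V1. E v (fst q) \<and> E v (snd q)}))"
        by simp
      also have "\<dots> \<le> (\<Sum>q\<in>Bad. 4 * p^2 * n1)"
      proof (rule sum_mono)
        fix q assume q: "q \<in> Bad"
        then obtain u w where uw: "q = (u, w)" "u \<in> V2" "w \<in> V3" "E u w" unfolding Bad_def by auto
        have "{v\<in>V1. E v (fst q) \<and> E v (snd q)} = {v \<in> V1. E u v \<and> E w v}"
          using uw sym by auto
        then show "real (card {v\<in>V1. E v (fst q) \<and> E v (snd q)}) \<le> 4 * p^2 * n1"
          using codeg uw unfolding n1_def by simp
      qed
      also have "\<dots> = real (card Bad) * (4 * p^2 * n1)" by simp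
      finally show ?thesis .
    qed
    define M where "M = eps' * e12 * e13 * e23 * n2 * n3"
    have Meq: "eps' * dcoef E p V1 V2 * dcoef E p V1 V3 * dcoef E p V2 V3 * p ^ 3
            * real (card V2) * real (card V3) = M"
      unfolding M_def e12_def e13_def e23_def n2_def n3_def dcoef_def using p
      by (simp add: power3_eq_cube)
    define S where "S = {v \<in> V1. real (card (B v)) > M}"
    have finS: "finite S" "S \<subseteq> V1" unfolding S_def using fin by auto
    have SM: "real (card S) * M \<le> real (card Bad) * (4 * p^2 * n1)"
    proof -
      have "real (card S) * M = (\<Sum>v\<in>S. M)" by simp
      also have "\<dots> \<le> (\<Sum>v\<in>S. real (card (B v)))"
        by (rule sum_mono) (auto simp: S_def)
      also have "\<dots> \<le> (\<Sum>v\<in>V1. real (card (B v)))"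
        by (rule sum_mono2[OF fin(1) finS(2)]) auto
      also have "\<dots> = real (\<Sum>v\<in>V1. card (B v))" by simp
      finally show ?thesis using sumB by linarith
    qed
    have cS: "real (card S) \<le> 0.32 * a * n1"
    proof -
      have n2p: "n2 > 0"
      proof (rule ccontr)
        assume "\<not> n2 > 0"
        then have "card V2 = 0" unfolding n2_def by simp
        then have "e23 = 0" unfolding e23_def dens_def by simp
        then show False using e12p dp by simp
      qed
      have n3p: "n3 > 0"
      proof (rule ccontr)
        assume "\<not> n3 > 0"
        then have "card V3 = 0" unfolding n3_def by simp
        then have "e23 = 0" unfolding e23_def dens_def by simp
        then show False using e12p dp by simp
      qed
      define K where "K = e23 * n2 * n3"
      have K: "K > 0" unfolding K_def using n2p n3p e12p dp by simp
      have "real (card S) * (eps' * e12 * e13) * K = real (card S) * M"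
        unfolding M_def K_def by (simp add: algebra_simps)
      also have "\<dots> \<le> real (card Bad) * (4 * p^2 * n1)" by (rule SM)
      also have "\<dots> \<le> (8 * eps * e23 * n2 * n3) * (4 * p^2 * n1)"
        using BadB n0 by (intro mult_right_mono) auto
      also have "\<dots> = (32 * eps * p^2 * n1) * K" unfolding K_def by (simp add: algebra_simps)
      finally have "real (card S) * (eps' * e12 * e13) \<le> 32 * eps * p^2 * n1"
        using K by simp
      moreover have "a * b^2 * p^2 \<le> eps' * e12 * e13"
      proof -
        have "b * p \<le> e12" "b * p \<le> e13" using b p e12p
          by (smt (verit) mult_right_mono)+
        moreover have "0 \<le> b * p" using b p by simp
        ultimately have bb: "(b*p) * (b*p) \<le> e12 * e13" by (intro mult_mono) auto
        have "a * ((b*p) * (b*p)) \<le> eps' * (e12 * e13)"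
          using mult_mono[OF a(3) bb] eps'0 by simp
        then show ?thesis by (simp add: power2_eq_square algebra_simps)
      qed
      ultimately have "real (card S) * (a * b^2 * p^2) \<le> 32 * eps * p^2 * n1"
        by (smt (verit) mult_left_mono of_nat_0_le_iff)
      also have "\<dots> = (0.32 * a * n1) * (a * b^2 * p^2)" unfolding eps_def
        by (simp add: power2_eq_square algebra_simps)
      finally have "real (card S) * (a * b^2 * p^2) \<le> (0.32 * a * n1) * (a * b^2 * p^2)" .
      moreover have "a * b^2 * p^2 > 0" using a b p by simp
      ultimately show ?thesis by (simp only: mult_le_cancel_right)
    qed
    have sub: "{v \<in> V1. \<not> good_vertex E eps' p V1 V2 V3 v}
            \<subseteq> {v \<in> V1. \<not> typical_vertex E eps p V1 V2 V3 v} \<union> S"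
    proof
      fix v assume v: "v \<in> {v \<in> V1. \<not> good_vertex E eps' p V1 V2 V3 v}"
      show "v \<in> {v \<in> V1. \<not> typical_vertex E eps p V1 V2 V3 v} \<union> S"
      proof (cases "typical_vertex E eps p V1 V2 V3 v")
        case True
        then have "typical_vertex E eps' p V1 V2 V3 v"
          using typical_mono[OF True _ p, of eps'] epsa a by simp
        then have "\<not> real (card (B v)) \<le> M" using v unfolding good_vertex_def B_def Meq by auto
        then show ?thesis using v unfolding S_def by auto
      qed (use v in auto)
    qed
    have "card {v \<in> V1. \<not> good_vertex E eps' p V1 V2 V3 v}
          \<le> card ({v \<in> V1. \<not> typical_vertex E eps p V1 V2 V3 v} \<union> S)"
      by (rule card_mono[OF _ sub]) (use fin finS in auto)
    also have "\<dots> \<le> card {v \<in> V1. \<not> typical_vertex E eps p V1 V2 V3 v} + card S" by (rule card_Un_le)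
    finally have "real (card {v \<in> V1. \<not> good_vertex E eps' p V1 V2 V3 v}) \<le> eps * n1 + 0.32 * a * n1"
      using NT1 cS by linarith
    also have "\<dots> \<le> a * n1"
    proof -
      have "(eps + 0.32 * a) * n1 \<le> a * n1" using epsa n0 a by (intro mult_right_mono) auto
      then show ?thesis by (simp add: algebra_simps)
    qed
    also have "\<dots> \<le> eps' * card V1" using a n0 unfolding n1_def by (simp add: mult_right_mono)
    finally show "real (card {v \<in> V1. \<not> good_vertex E eps' p V1 V2 V3 v}) \<le> eps' * real (card V1)" .
  qed
qed


end
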